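(* Let $J\subset K[x,y]_y$ be a binomial ideal and let $\xi\in\mathrm{Spec}(K[x,y]_y)$ be a point where $\mathrm{Eord}_\xi(J)=\theta>0$ is maximal (over $W$). Let $f=y^\gamma x^\alpha-bx^\beta\in J$ be a binomial without common factors, with $\alpha,\beta\in\mathbb N^s$, $\gamma\in\mathbb Z^{n-s}$, $b\in K$, $0<|\alpha|\le|\beta|$, such that $\mathrm{Eord}_\xi(f)=\theta=|\alpha|$, $\xi_i=0$ for all $i$ with $\alpha_i>0$, and $y^\gamma(\xi)\neq0$. Then, in a neighbourhood of $\xi$, $\mathrm{ESing}(J,\theta)\subseteq\{x_i=0\}$ for some $i$ with $\alpha_i>0$.
   Context: $K$ is an algebraically closed field of arbitrary characteristic; $W=\mathrm{Spec}(K[x_1,\dots,x_s,y_1,\dots,y_{n-s}]_y)$ (localization at $y_1\cdots y_{n-s}$). $E\cap W=\{V(x_1),\dots,V(x_s)\}$. For $\xi\in W$ let $\Lambda(\xi)=\{i:\xi\in V(x_i)\}$ and $E^0_{\Lambda(\xi)}$ the stratum of points lying on $V(x_i)$ exactly for $i\in\Lambda(\xi)$; its ideal is generated by the $x_i$, $i\in\Lambda(\xi)$. $\mathrm{Eord}_\xi(J)=\max\{m\in\mathbb N: J_\xi\subset(I(E^0_{\Lambda(\xi)})_\xi)^m\}$, $\mathrm{Eord}_\xi(f)=\mathrm{Eord}_\xi(\langle f\rangle)$, and $\mathrm{ESing}(J,\theta)=\{\xi:\mathrm{Eord}_\xi(J)\ge\theta\}$. A binomial ideal is an ideal generated by elements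 $x^{\lambda}(1-\mu y^{\delta})$ or $x^{\nu}(y^{\gamma}x^{\alpha}-bx^{\beta})$ with $\lambda,\nu,\alpha,\beta\in\mathbb N^s$, $\gamma,\delta\in\mathbb Z^{n-s}$, $\mu,b\in K$, each $y^\gamma x^\alpha-bx^\beta$ without common factors and $0<|\alpha|\le|\beta|$. *)

theory Defs
  imports Main "HOL-Library.Poly_Mapping" "HOL-Library.Extended_Nat"
    "HOL-Computational_Algebra.Polynomial"
begin

text \<open>Laurent polynomials in variables indexed by nat.  Variable i < s is x_(i+1),
  variable s + j (j < n - s) is y_(j+1).  An element of K[x,y]_y is a finitely supported
  map from exponent vectors (nat =>0 int) to K whose exponents are nonnegative on the
  x-variables and vanish on indices >= n.\<close>

type_synonym 'k lpoly = "(nat \<Rightarrow>\<^sub>0 int) \<Rightarrow>\<^sub>0 'k"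

definition alg_closed :: "'k::field itself \<Rightarrow> bool" where
  "alg_closed _ \<longleftrightarrow> (\<forall>p :: 'k poly. degree p > 0 \<longrightarrow> (\<exists>z. poly p z = 0))"

definition Rng :: "nat \<Rightarrow> nat \<Rightarrow> 'k::field lpoly set" where
  "Rng s n = {p. \<forall>e \<in> Poly_Mapping.keys p. (\<forall>i<s. Poly_Mapping.lookup e i \<ge> 0) \<and> (\<forall>i\<ge>n. Poly_Mapping.lookup e i = 0)}"

text \<open>Closed points of W = Spec K[x,y]_y: x-coordinates arbitrary, y-coordinates nonzero;
  coordinates at indices >= n normalised to 0.\<close>
definition Pts :: "nat \<Rightarrow> nat \<Rightarrow> (nat \<Rightarrow> 'k::field) set" where
  "Pts s n = {a. (\<forall>i. s \<le> i \<and> i < n \<longrightarrow> a i \<noteq> 0) \<and> (\<forall>i\<ge>n. a i = 0)}"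

definition eval :: "'k::field lpoly \<Rightarrow> (nat \<Rightarrow> 'k) \<Rightarrow> 'k" where
  "eval p a = (\<Sum>e\<in>Poly_Mapping.keys p. Poly_Mapping.lookup p e * (\<Prod>i\<in>Poly_Mapping.keys e. a i powi Poly_Mapping.lookup e i))"

definition ideal_gen :: "nat \<Rightarrow> nat \<Rightarrow> 'k::field lpoly set \<Rightarrow> 'k lpoly set" where
  "ideal_gen s n S = {\<Sum>g\<in>F. c g * g | F c. finite F \<and> F \<subseteq> S \<and> (\<forall>g\<in>F. c g \<in> Rng s n)}"

definition ideal_pow :: "nat \<Rightarrow> nat \<Rightarrow> 'k::field lpoly set \<Rightarrow> nat \<Rightarrow> 'k lpoly set" where
  "ideal_pow s n I m = ideal_gen s n {prod_list l | l. length l = m \<and> set l \<subseteq> I}"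

definition var :: "nat \<Rightarrow> 'k::field lpoly" where
  "var i = Poly_Mapping.single (Poly_Mapping.single i 1) 1"

definition expo :: "nat \<Rightarrow> nat \<Rightarrow> (nat \<Rightarrow> nat) \<Rightarrow> (nat \<Rightarrow> int) \<Rightarrow> (nat \<Rightarrow>\<^sub>0 int)" where
  "expo s n \<alpha> \<gamma> = Abs_poly_mapping
     (\<lambda>i. if i < s then int (\<alpha> i) else if i < n then \<gamma> (i - s) else 0)"

definition mon :: "nat \<Rightarrow> nat \<Rightarrow> (nat \<Rightarrow> nat) \<Rightarrow> (nat \<Rightarrow> int) \<Rightarrow> 'k \<Rightarrow> 'k::field lpoly" where
  "mon s n \<alpha> \<gamma> c = Poly_Mapping.single (expo s n \<alpha> \<gamma>) c"

definition absn :: "nat \<Rightarrow> (nat \<Rightarrow> nat) \<Rightarrow> nat" where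
  "absn s \<alpha> = (\<Sum>i<s. \<alpha> i)"

definition coprime_exps :: "nat \<Rightarrow> (nat \<Rightarrow> nat) \<Rightarrow> (nat \<Rightarrow> nat) \<Rightarrow> bool" where
  "coprime_exps s \<alpha> \<beta> \<longleftrightarrow> (\<forall>i<s. \<alpha> i = 0 \<or> \<beta> i = 0)"

definition zeroy :: "nat \<Rightarrow> int" where "zeroy = (\<lambda>_. 0)"
definition zerox :: "nat \<Rightarrow> nat" where "zerox = (\<lambda>_. 0)"

definition binom :: "nat \<Rightarrow> nat \<Rightarrow> (nat \<Rightarrow> nat) \<Rightarrow> (nat \<Rightarrow> nat) \<Rightarrow> (nat \<Rightarrow> int) \<Rightarrow> 'k \<Rightarrow> 'k::field lpoly" where
  "binom s n \<alpha> \<beta> \<gamma> b = mon s n \<alpha> \<gamma> 1 - mon s n \<beta> zeroy b"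

definition binom_gens :: "nat \<Rightarrow> nat \<Rightarrow> 'k::field lpoly set" where
  "binom_gens s n =
     {mon s n lam zeroy 1 * (1 - mon s n zerox \<delta> \<mu>) | lam \<delta> \<mu>. True} \<union>
     {mon s n \<nu> zeroy 1 * binom s n \<alpha> \<beta> \<gamma> b | \<nu> \<alpha> \<beta> \<gamma> b.
        coprime_exps s \<alpha> \<beta> \<and> 0 < absn s \<alpha> \<and> absn s \<alpha> \<le> absn s \<beta>}"

definition binomial_ideal :: "nat \<Rightarrow> nat \<Rightarrow> 'k::field lpoly set \<Rightarrow> bool" where
  "binomial_ideal s n J \<longleftrightarrow> (\<exists>G \<subseteq> binom_gens s n. J = ideal_gen s n G)"

definition Lam :: "nat \<Rightarrow> (nat \<Rightarrow> 'k::field) \<Rightarrow> nat set" where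
  "Lam s a = {i. i < s \<and> a i = 0}"

definition stratum_ideal :: "nat \<Rightarrow> nat \<Rightarrow> (nat \<Rightarrow> 'k::field) \<Rightarrow> 'k lpoly set" where
  "stratum_ideal s n a = ideal_gen s n (var ` Lam s a)"

text \<open>J_a \<subseteq> (I_a)^m in the local ring at the point a: every f in J becomes,
  after multiplying by some h with h(a) \<noteq> 0, an element of I^m.\<close>
definition loc_sub :: "nat \<Rightarrow> nat \<Rightarrow> 'k::field lpoly set \<Rightarrow> (nat \<Rightarrow> 'k) \<Rightarrow> nat \<Rightarrow> bool" where
  "loc_sub s n J a m \<longleftrightarrow>
     (\<forall>f\<in>J. \<exists>h\<in>Rng s n. eval h a \<noteq> 0 \<and> h * f \<in> ideal_pow s n (stratum_ideal s n a) m)"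

definition Eord :: "nat \<Rightarrow> nat \<Rightarrow> 'k::field lpoly set \<Rightarrow> (nat \<Rightarrow> 'k) \<Rightarrow> enat" where
  "Eord s n J a = Sup {enat m | m. loc_sub s n J a m}"

definition ESing :: "nat \<Rightarrow> nat \<Rightarrow> 'k::field lpoly set \<Rightarrow> enat \<Rightarrow> (nat \<Rightarrow> 'k) set" where
  "ESing s n J \<theta> = {a \<in> Pts s n. Eord s n J a \<ge> \<theta>}"

end

theory Submission
  imports Defs
begin


definition wt :: "nat set \<Rightarrow> (nat \<Rightarrow>\<^sub>0 int) \<Rightarrow> int" where
  "wt L e = (\<Sum>j\<in>L. Poly_Mapping.lookup e j)"

lemma wt_add: "wt L (a + b) = wt L a + wt L b"
  by (simp add: wt_def lookup_add sum.distrib)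

definition ge :: "nat set \<Rightarrow> 'k::field lpoly \<Rightarrow> int \<Rightarrow> bool" where
  "ge L p m \<longleftrightarrow> (\<forall>e\<in>Poly_Mapping.keys p. wt L e \<ge> m)"

definition hom :: "nat set \<Rightarrow> 'k::field lpoly \<Rightarrow> int \<Rightarrow> bool" where
  "hom L p m \<longleftrightarrow> (\<forall>e\<in>Poly_Mapping.keys p. wt L e = m)"

definition part :: "nat set \<Rightarrow> 'k::field lpoly \<Rightarrow> int \<Rightarrow> 'k lpoly" where
  "part L p d = Abs_poly_mapping (\<lambda>e. if wt L e = d then Poly_Mapping.lookup p e else 0)"

lemma lookup_part: "Poly_Mapping.lookup (part L p d) e = (if wt L e = d then Poly_Mapping.lookup p e else 0)"
proof -
  have "finite {e. (if wt L e = d then Poly_Mapping.lookup p e else 0) \<noteq> 0}"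
    by (rule finite_subset[of _ "Poly_Mapping.keys p"]) (auto simp: in_keys_iff)
  then show ?thesis unfolding part_def by simp
qed

lemma part_add: "part L (p + q) d = part L p d + part L q d"
  by (simp add: poly_mapping_eq_iff fun_eq_iff lookup_part lookup_add)

lemma part_ge0: "ge L p (d+1) \<Longrightarrow> part L p d = 0"
  by (force simp: poly_mapping_eq_iff fun_eq_iff lookup_part ge_def in_keys_iff)

lemma part_hom: "hom L p d \<Longrightarrow> part L p d = p"
  by (force simp: poly_mapping_eq_iff fun_eq_iff lookup_part hom_def in_keys_iff)

lemma ge_mult: "ge L p m \<Longrightarrow> ge L q k \<Longrightarrow> ge L (p*q) (m+k)"
  unfolding ge_def using keys_mult[of p q] by (force simp: wt_add)

lemma hom_mult: "hom L p m \<Longrightarrow> hom L q k \<Longrightarrow> hom L (p*q) (m+k)"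
  unfolding hom_def using keys_mult[of p q] by (force simp: wt_add)

lemma ge_add: "ge L p m \<Longrightarrow> ge L q m \<Longrightarrow> ge L (p+q) m"
  unfolding ge_def using keys_add[of p q] by blast

lemma ge_mono: "ge L p m \<Longrightarrow> k \<le> m \<Longrightarrow> ge L p k"
  unfolding ge_def by force

lemma ge_sum: "(\<And>g. g\<in>F \<Longrightarrow> ge L (f g) m) \<Longrightarrow> ge L (sum f F) m"
proof (induction F rule: infinite_finite_induct)
  case (infinite A) then show ?case by (simp add: ge_def)
next
  case empty then show ?case by (simp add: ge_def)
next
  case (insert x F) then show ?case by (simp add: ge_add)
qed

lemma hom_part: "hom L (part L p d) d"
  unfolding hom_def by (metis in_keys_iff lookup_part)

lemma ge_split: "ge L p m \<Longrightarrow> ge L (p - part L p m) (m+1)"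
  by (force simp: ge_def in_keys_iff lookup_minus lookup_part split: if_splits)

lemma part_mult:
  assumes "ge L p m" "ge L q k"
  shows "part L (p*q) (m+k) = part L p m * part L q k"
proof -
  define p0 p1 q0 q1 where "p0 = part L p m" "p1 = p - p0" "q0 = part L q k" "q1 = q - q0"
  have g1: "ge L p1 (m+1)" "ge L q1 (k+1)" using ge_split assms p0_p1_q0_q1_def by blast+
  have g0: "ge L p0 m" "ge L q0 k" using hom_part p0_p1_q0_q1_def by (force simp: ge_def hom_def)+
  have "p = p0 + p1" "q = q0 + q1" using p0_p1_q0_q1_def by simp_all
  then have "p*q = p0*q0 + (p0*q1 + p1*q0 + p1*q1)"
    by (metis (no_types, lifting) add.assoc distrib_left distrib_right)
  moreover have R: "ge L (p0*q1 + p1*q0 + p1*q1) (m+k+1)"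
  proof -
    have "ge L (p0*q1) (m+k+1)" using ge_mult[OF g0(1) g1(2)] by (simp add: add.assoc)
    moreover have "ge L (p1*q0) (m+k+1)" using ge_mult[OF g1(1) g0(2)] by (simp add: algebra_simps)
    moreover have "ge L (p1*q1) (m+k+1)" using ge_mono[OF ge_mult[OF g1(1) g1(2)]] by simp
    ultimately show ?thesis by (simp add: ge_add)
  qed
  moreover have "hom L (p0*q0) (m+k)" using hom_mult hom_part p0_p1_q0_q1_def by blast
  ultimately have "part L (p*q) (m+k) = part L (p0*q0) (m+k) + part L (p0*q1 + p1*q0 + p1*q1) (m+k)"
    by (simp only: part_add)
  also have "\<dots> = p0*q0" using part_ge0[OF R] part_hom[OF \<open>hom L (p0*q0) (m+k)\<close>] by simp
  finally show ?thesis using p0_p1_q0_q1_def by simp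
qed

lemma Lam_sub: "Lam s a \<subseteq> {..<s}" by (auto simp: Lam_def)

lemma rng_ge: "L \<subseteq> {..<s} \<Longrightarrow> g \<in> Rng s n \<Longrightarrow> ge L g 0"
  unfolding ge_def wt_def Rng_def by (simp add: subset_eq sum_nonneg)

lemma var_ge: "finite L \<Longrightarrow> j \<in> L \<Longrightarrow> ge L (var j :: 'k::field lpoly) 1"
  by (simp add: ge_def wt_def var_def lookup_single when_def)

lemma gen_ge:
  assumes "L \<subseteq> {..<s}" "\<And>g. g \<in> S \<Longrightarrow> ge L g m" "p \<in> ideal_gen s n S"
  shows "ge L p m"
proof -
  from assms(3) obtain F c where F: "p = (\<Sum>g\<in>F. c g * g)" "F \<subseteq> S" "\<forall>g\<in>F. c g \<in> Rng s n"
    unfolding ideal_gen_def by blast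
  have "ge L (c g * g) m" if "g \<in> F" for g
    using ge_mult[OF rng_ge[OF assms(1)] assms(2), of "c g" n g] F(2,3) that by auto
  then show ?thesis unfolding F(1) by (rule ge_sum)
qed

lemma prodlist_ge: "(\<And>p. p \<in> set l \<Longrightarrow> ge L p 1) \<Longrightarrow> ge L (prod_list l) (int (length l))"
proof (induction l)
  case Nil then show ?case by (simp add: ge_def wt_def)
next
  case (Cons a l) then show ?case using ge_mult[of L a 1 "prod_list l" "int (length l)"] by (simp add: add.commute)
qed

lemma pow_ge:
  assumes "p \<in> ideal_pow s n (stratum_ideal s n a) m"
  shows "ge (Lam s a) p (int m)"
proof -
  have fin: "finite (Lam s a)" using Lam_sub finite_subset by blast
  have st: "ge (Lam s a) q 1" if "q \<in> stratum_ideal s n a" for q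
    using gen_ge[OF Lam_sub _ that[unfolded stratum_ideal_def]] var_ge[OF fin] by blast
  have pl: "ge (Lam s a) g (int m)" if "g \<in> {prod_list l |l. length l = m \<and> set l \<subseteq> stratum_ideal s n a}" for g
  proof -
    from that obtain l where l: "g = prod_list l" "length l = m" "set l \<subseteq> stratum_ideal s n a" by blast
    have "ge (Lam s a) (prod_list l) (int (length l))"
      by (rule prodlist_ge) (use st l(3) in blast)
    then show ?thesis using l(1,2) by simp
  qed
  have p: "p \<in> ideal_gen s n {prod_list l |l. length l = m \<and> set l \<subseteq> stratum_ideal s n a}"
    using assms unfolding ideal_pow_def .
  show ?thesis using gen_ge[where L="Lam s a", OF Lam_sub pl p] by simp
qed

lemma lookup_expo: "Poly_Mapping.lookup (expo s n \<alpha> \<gamma>) j =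
   (if j < s then int (\<alpha> j) else if j < n then \<gamma> (j - s) else 0)"
proof -
  have "finite {j. (if j < s then int (\<alpha> j) else if j < n then \<gamma> (j - s) else 0) \<noteq> 0}"
    by (rule finite_subset[of _ "{..<max s n}"]) auto
  then show ?thesis unfolding expo_def by simp
qed

lemma wt_expo: "L \<subseteq> {..<s} \<Longrightarrow> wt L (expo s n \<alpha> \<gamma>) = (\<Sum>j\<in>L. int (\<alpha> j))"
  unfolding wt_def by (rule sum.cong) (use lookup_expo in force)+

lemma eord_ge:
  assumes "enat \<theta> \<le> Eord s n J a" "\<theta> > 0"
  shows "\<exists>m\<ge>\<theta>. loc_sub s n J a m"
proof -
  have "enat (\<theta> - 1) < Sup {enat m | m. loc_sub s n J a m}"
  proof -
    have "enat (\<theta> - 1) < enat \<theta>" using assms(2) by simp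
    then show ?thesis using assms(1) unfolding Eord_def by (rule less_le_trans)
  qed
  then obtain x where "x \<in> {enat m | m. loc_sub s n J a m}" "enat (\<theta> - 1) < x"
    using less_Sup_iff by blast
  then obtain m where "\<theta> - 1 < m" "loc_sub s n J a m" by auto
  moreover have "\<theta> \<le> m" using \<open>\<theta> - 1 < m\<close> assms(2) by linarith
  ultimately show ?thesis by blast
qed



theorem mainTheorem8:
  fixes s n :: nat and J :: "'k::field lpoly set" and \<xi> :: "nat \<Rightarrow> 'k"
    and \<alpha> \<beta> :: "nat \<Rightarrow> nat" and \<gamma> :: "nat \<Rightarrow> int" and b :: 'k and \<theta> :: nat
  assumes "alg_closed TYPE('k)"
    and "s \<le> n"
    and "binomial_ideal s n J"
    and "\<xi> \<in> Pts s n"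
    and "Eord s n J \<xi> = enat \<theta>" and "\<theta> > 0"
    and "\<forall>\<eta>\<in>Pts s n. Eord s n J \<eta> \<le> Eord s n J \<xi>"
    and "binom s n \<alpha> \<beta> \<gamma> b \<in> J"
    and "coprime_exps s \<alpha> \<beta>" and "0 < absn s \<alpha>" and "absn s \<alpha> \<le> absn s \<beta>"
    and "Eord s n {binom s n \<alpha> \<beta> \<gamma> b} \<xi> = enat \<theta>"
    and "\<theta> = absn s \<alpha>"
    and "\<forall>i<s. \<alpha> i > 0 \<longrightarrow> \<xi> i = 0"
    and "eval (mon s n zerox \<gamma> 1) \<xi> \<noteq> 0"
  shows "\<exists>g\<in>Rng s n. eval g \<xi> \<noteq> 0 \<and>
           (\<exists>i<s. \<alpha> i > 0 \<and>
              (\<forall>\<eta>\<in>ESing s n J (enat \<theta>). eval g \<eta> \<noteq> 0 \<longrightarrow> \<eta> i = 0))"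
proof -
  obtain i0 where i0: "i0 < s" "\<alpha> i0 > 0"
  proof -
    have "(\<Sum>i<s. \<alpha> i) > 0" using assms(10) unfolding absn_def .
    then show ?thesis using that by (metis gr0I lessThan_iff sum.neutral)
  qed
  have one_rng: "(1::'k lpoly) \<in> Rng s n" by (simp add: Rng_def)
  have one_eval: "eval (1::'k lpoly) \<eta> = 1" for \<eta> by (simp add: eval_def)
  have core: "\<eta> i0 = 0" if eta: "\<eta> \<in> ESing s n J (enat \<theta>)" for \<eta>
  proof (rule ccontr)
    assume ne: "\<eta> i0 \<noteq> 0"
    define L where "L = Lam s \<eta>"
    have Ls: "L \<subseteq> {..<s}" unfolding L_def by (rule Lam_sub)
    have finL: "finite L" using Ls finite_subset by blast
    have i0L: "i0 \<notin> L" using ne by (simp add: L_def Lam_def)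
    obtain m where m: "m \<ge> \<theta>" "loc_sub s n J \<eta> m"
      using eord_ge[of \<theta> s n J \<eta>] eta assms(6) by (auto simp: ESing_def)
    define f where "f = (binom s n \<alpha> \<beta> \<gamma> b :: 'k lpoly)"
    obtain h where h: "h \<in> Rng s n" "eval h \<eta> \<noteq> 0"
        "h * f \<in> ideal_pow s n (stratum_ideal s n \<eta>) m"
      using m(2) assms(8) unfolding loc_sub_def f_def by blast
    have G: "ge L (h*f) (int \<theta>)"
      using ge_mono[OF pow_ge[OF h(3)]] m(1) by (simp add: L_def)
    have hge: "ge L h 0" using rng_ge[OF Ls h(1)] .
    obtain e where e: "e \<in> Poly_Mapping.keys h"
      "Poly_Mapping.lookup h e * (\<Prod>i\<in>Poly_Mapping.keys e. \<eta> i powi Poly_Mapping.lookup e i) \<noteq> 0"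
      using h(2) unfolding eval_def by (meson sum.neutral)
    have we: "wt L e = 0"
    proof -
      have "Poly_Mapping.lookup e j = 0" if j: "j \<in> L" for j
      proof (rule ccontr)
        assume nz: "Poly_Mapping.lookup e j \<noteq> 0"
        have "j < s" "\<eta> j = 0" using j by (auto simp: L_def Lam_def)
        then have "Poly_Mapping.lookup e j \<ge> 0" using h(1) e(1) by (auto simp: Rng_def)
        then have pos: "Poly_Mapping.lookup e j > 0" using nz by simp
        have jk: "j \<in> Poly_Mapping.keys e" using nz by (simp add: in_keys_iff)
        have "\<eta> j powi Poly_Mapping.lookup e j = 0" using pos \<open>\<eta> j = 0\<close> by simp
        then have "(\<Prod>i\<in>Poly_Mapping.keys e. \<eta> i powi Poly_Mapping.lookup e i) = 0"
          using jk by (meson finite_keys prod_zero)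
        then show False using e(2) by simp
      qed
      then show ?thesis unfolding wt_def by simp
    qed
    have h0: "part L h 0 \<noteq> 0"
    proof -
      have "Poly_Mapping.lookup (part L h 0) e \<noteq> 0"
        using we e(1) by (simp add: lookup_part in_keys_iff)
      then show ?thesis by auto
    qed
    define eA where "eA = expo s n \<alpha> \<gamma>"
    define eB where "eB = expo s n \<beta> zeroy"
    have f_eq: "f = Poly_Mapping.single eA 1 - Poly_Mapping.single eB b"
      unfolding f_def binom_def mon_def eA_def eB_def ..
    define a where "a = (\<Sum>j\<in>L. int (\<alpha> j))"
    define b' where "b' = (\<Sum>j\<in>L. int (\<beta> j))"
    have wA: "wt L eA = a" unfolding eA_def a_def by (rule wt_expo[OF Ls])
    have wB: "wt L eB = b'" unfolding eB_def b'_def by (rule wt_expo[OF Ls])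
    have AB: "eA \<noteq> eB"
    proof
      assume "eA = eB"
      then have "Poly_Mapping.lookup eA i0 = Poly_Mapping.lookup eB i0" by simp
      moreover have "\<beta> i0 = 0" using assms(9) i0 by (auto simp: coprime_exps_def)
      ultimately show False using i0 by (simp add: eA_def eB_def lookup_expo)
    qed
    have a_lt: "a < int \<theta>"
    proof -
      have "a \<le> (\<Sum>j\<in>{..<s} - {i0}. int (\<alpha> j))"
        unfolding a_def by (rule sum_mono2) (use Ls i0L in auto)
      also have "\<dots> < (\<Sum>j\<in>{..<s} - {i0}. int (\<alpha> j)) + int (\<alpha> i0)" using i0 by simp
      also have "\<dots> = (\<Sum>j<s. int (\<alpha> j))"
        using i0 by (simp add: sum.remove[of "{..<s}" i0] add.commute)
      also have "\<dots> = int \<theta>" using assms(13) by (simp add: absn_def)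
      finally show ?thesis .
    qed
    have lf: "Poly_Mapping.lookup f x = (if x = eA then 1 else 0) - (if x = eB then b else 0)" for x
      by (simp add: f_eq lookup_minus lookup_single when_def)
    define k where "k = (if b = 0 \<or> a \<le> b' then a else b')"
    have k_lt: "k < int \<theta>" using a_lt by (simp add: k_def)
    have fge: "ge L f k"
      unfolding ge_def
    proof
      fix x assume "x \<in> Poly_Mapping.keys f"
      then have "Poly_Mapping.lookup f x \<noteq> 0" by (simp add: in_keys_iff)
      then have "x = eA \<or> (x = eB \<and> b \<noteq> 0)" using lf[of x] by (auto split: if_splits)
      then show "k \<le> wt L x" using wA wB by (auto simp: k_def)
    qed
    have f0: "part L f k \<noteq> 0"
    proof (cases "b = 0 \<or> a \<le> b'")
      case True
      then have "Poly_Mapping.lookup (part L f k) eA = 1"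
        using AB wA by (simp add: lookup_part lf k_def)
      then show ?thesis by auto
    next
      case False
      then have "Poly_Mapping.lookup (part L f k) eB = - b"
        using AB wB by (simp add: lookup_part lf k_def)
      then show ?thesis using False by auto
    qed
    have "part L (h*f) (0 + k) = part L h 0 * part L f k"
      by (rule part_mult[OF hge fge])
    also have "\<dots> \<noteq> 0" using h0 f0 by simp
    finally have "part L (h*f) k \<noteq> 0" by simp
    moreover have "part L (h*f) k = 0"
      by (rule part_ge0) (rule ge_mono[OF G], use k_lt in simp)
    ultimately show False by simp
  qed
  show ?thesis
  proof (rule bexI[OF _ one_rng], intro conjI exI)
    show "eval 1 \<xi> \<noteq> (0::'k)" using one_eval by simp
    show "i0 < s" "0 < \<alpha> i0" using i0 by auto
    show "\<forall>\<eta>\<in>ESing s n J (enat \<theta>). eval 1 \<eta> \<noteq> (0::'k) \<longrightarrow> \<eta> i0 = 0" using core by blast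
  qed
qed

end
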